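(* Let $w$ be a positive integer constant. There exists a constant $h>0$ such that if $p>0$ is a function of $n$ and $f$ is a $w$-DNF on $\{0,1\}^{L_{d'}}$, then $f\circ\Phi_{d'}$ can be represented as a decision tree of height at most $h\ln(p)$ with probability $1-O(1/p)$.
   Context: Fix $k\ge2$ and $0\le\theta<1$; $n=k^d$ with $d'\le d$. $L_r$ is the set of depth-$r$ vertices of the complete $k$-ary tree, $\mathrm{parent}(v)$ the parent of $v$. $R_\theta$ is the distribution on $\{0,1,*\}$ giving $0$ and $1$ each probability $(1-\theta)/2$ and $*$ probability $\theta$. $\Phi_{d'}:\{0,1\}^{L_{d'-1}}\to\{0,1\}^{L_{d'}}$ is the random map defined by drawing $r\in\{0,1,*\}^{L_{d'}}$ with i.i.d. $R_\theta$ coordinates and setting $(\Phi_{d'}(x))_v=r_v$ if $r_v\in\{0,1\}$, and $x_{\mathrm{parent}(v)}$ if $r_v=*$. A $w$-DNF is an OR of ANDs of at most $w$ literals. *)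

theory Defs
  imports "HOL-Probability.Probability"
begin

text \<open>Vertices of the complete k-ary tree: lists over {0..<k}; depth = length;
  the parent of a vertex is obtained by dropping its last entry.\<close>
definition tree_level :: "nat \<Rightarrow> nat \<Rightarrow> nat list set" where
  "tree_level k r = {v. length v = r \<and> set v \<subseteq> {..<k}}"

definition parent :: "nat list \<Rightarrow> nat list" where
  "parent v = butlast v"

text \<open>The distribution R_theta on {0,1,*}: Some False = 0, Some True = 1, None = *.\<close>
definition R_theta :: "real \<Rightarrow> bool option pmf" where
  "R_theta \<theta> = embed_pmf (\<lambda>x. case x of None \<Rightarrow> \<theta> | Some _ \<Rightarrow> (1 - \<theta>) / 2)"

definition restr_pmf :: "nat \<Rightarrow> real \<Rightarrow> nat \<Rightarrow> (nat list \<Rightarrow> bool option) pmf" where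
  "restr_pmf k \<theta> d' = Pi_pmf (tree_level k d') None (\<lambda>_. R_theta \<theta>)"

definition Phi :: "(nat list \<Rightarrow> bool option) \<Rightarrow> (nat list \<Rightarrow> bool) \<Rightarrow> (nat list \<Rightarrow> bool)" where
  "Phi r x v = (case r v of Some b \<Rightarrow> b | None \<Rightarrow> x (parent v))"

text \<open>w-DNF over the variable set V: OR of terms, each an AND of at most w literals
  (a literal (v,b) means "y v = b").\<close>
definition is_wDNF :: "nat \<Rightarrow> 'v set \<Rightarrow> (('v \<Rightarrow> bool) \<Rightarrow> bool) \<Rightarrow> bool" where
  "is_wDNF w V f \<longleftrightarrow> (\<exists>T :: ('v \<times> bool) set set. finite T \<and>
     (\<forall>C\<in>T. finite C \<and> card C \<le> w \<and> fst ` C \<subseteq> V) \<and>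
     (\<forall>y. f y = (\<exists>C\<in>T. \<forall>(v, b)\<in>C. y v = b)))"

datatype 'v dtree = Leaf bool | Node 'v "'v dtree" "'v dtree"

fun dt_eval :: "'v dtree \<Rightarrow> ('v \<Rightarrow> bool) \<Rightarrow> bool" where
  "dt_eval (Leaf b) x = b"
| "dt_eval (Node v t0 t1) x = (if x v then dt_eval t1 x else dt_eval t0 x)"

fun dt_height :: "'v dtree \<Rightarrow> nat" where
  "dt_height (Leaf b) = 0"
| "dt_height (Node v t0 t1) = Suc (max (dt_height t0) (dt_height t1))"

definition has_dt_of_height :: "(('v \<Rightarrow> bool) \<Rightarrow> bool) \<Rightarrow> real \<Rightarrow> bool" where
  "has_dt_of_height g H \<longleftrightarrow> (\<exists>t. real (dt_height t) \<le> H \<and> (\<forall>x. dt_eval t x = g x))"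

end

theory Submission
  imports Defs
begin

definition dnf :: "('v \<times> bool) set set \<Rightarrow> ('v \<Rightarrow> bool) \<Rightarrow> bool" where
  "dnf T y = (\<exists>C\<in>T. \<forall>(v,b)\<in>C. y v = b)"
definition wdnf :: "nat \<Rightarrow> 'v set \<Rightarrow> ('v \<times> bool) set set \<Rightarrow> bool" where
  "wdnf w V T \<longleftrightarrow> finite T \<and> (\<forall>C\<in>T. finite C \<and> card C \<le> w \<and> fst ` C \<subseteq> V)"
definition PhiG :: "('v \<Rightarrow> 'u) \<Rightarrow> ('v \<Rightarrow> bool option) \<Rightarrow> ('u \<Rightarrow> bool) \<Rightarrow> 'v \<Rightarrow> bool" where
  "PhiG par r x v = (case r v of Some b \<Rightarrow> b | None \<Rightarrow> x (par v))"
definition mrg :: "('u \<Rightarrow> bool) \<Rightarrow> ('u \<Rightarrow> bool) \<Rightarrow> 'u set \<Rightarrow> 'u \<Rightarrow> bool" where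
  "mrg \<alpha> x S = (\<lambda>u. if u \<in> S then \<alpha> u else x u)"

lemma has_dt_const: "H \<ge> 0 \<Longrightarrow> has_dt_of_height (\<lambda>x. c) H"
  unfolding has_dt_of_height_def by (rule exI[of _ "Leaf c"]) auto

lemma has_dt_mono: "has_dt_of_height g H \<Longrightarrow> H \<le> H' \<Longrightarrow> has_dt_of_height g H'"
  unfolding has_dt_of_height_def by force

lemma has_dt_query:
  assumes "has_dt_of_height (\<lambda>x. g (x(u:=False))) H" "has_dt_of_height (\<lambda>x. g (x(u:=True))) H"
  shows "has_dt_of_height g (H+1)"
proof -
  obtain t0 where t0: "real (dt_height t0) \<le> H" "\<And>x. dt_eval t0 x = g (x(u:=False))"
    using assms(1) unfolding has_dt_of_height_def by auto
  obtain t1 where t1: "real (dt_height t1) \<le> H" "\<And>x. dt_eval t1 x = g (x(u:=True))"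
    using assms(2) unfolding has_dt_of_height_def by auto
  show ?thesis unfolding has_dt_of_height_def
  proof (intro exI[of _ "Node u t0 t1"] conjI allI)
    show "real (dt_height (Node u t0 t1)) \<le> H + 1" using t0 t1 by auto
    fix x
    show "dt_eval (Node u t0 t1) x = g x"
    proof (cases "x u")
      case True
      then have "x(u:=True) = x" by (simp add: fun_upd_idem)
      then show ?thesis using t1 True by simp
    next
      case False
      then have "x(u:=False) = x" by (simp add: fun_upd_idem)
      then show ?thesis using t0 False by simp
    qed
  qed
qed

lemma has_dt_merge:
  fixes g :: "('u \<Rightarrow> bool) \<Rightarrow> bool" and S :: "'u set"
  assumes "finite S"
  shows "(\<forall>\<alpha>\<in>PiE S (\<lambda>_. UNIV). has_dt_of_height (\<lambda>x. g (mrg \<alpha> x S)) H) \<Longrightarrow> has_dt_of_height g (H + card S)"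
  using assms
proof (induction S arbitrary: g rule: finite_induct)
  case empty
  then show ?case by (simp add: mrg_def)
next
  case (insert u S)
  have IHb: "has_dt_of_height (\<lambda>x. g (x(u:=b))) (H + card S)" for b
  proof (rule insert.IH, intro ballI)
    fix \<alpha> :: "'u \<Rightarrow> bool" assume a: "\<alpha> \<in> PiE S (\<lambda>_. UNIV)"
    have "\<alpha>(u:=b) \<in> PiE (insert u S) (\<lambda>_. UNIV)" using a insert.hyps by (auto simp: PiE_def extensional_def)
    then have h: "has_dt_of_height (\<lambda>x. g (mrg (\<alpha>(u:=b)) x (insert u S))) H" using insert.prems by blast
    have "(\<lambda>x. g (mrg (\<alpha>(u:=b)) x (insert u S))) = (\<lambda>x. g ((mrg \<alpha> x S)(u:=b)))"
      using insert.hyps by (auto simp: mrg_def fun_eq_iff intro!: arg_cong[where f=g])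
    then show "has_dt_of_height (\<lambda>x. g ((mrg \<alpha> x S)(u := b))) H" using h by simp
  qed
  have "has_dt_of_height g (H + card S + 1)" by (rule has_dt_query[OF IHb IHb])
  then show ?case using insert.hyps by (simp add: algebra_simps)
qed

lemma UNIV_bool_option: "(UNIV :: bool option set) = {None, Some True, Some False}"
  by auto

lemma finUNIV: "finite (UNIV :: bool option set)"
  unfolding UNIV_bool_option by simp

lemma pmf_R_theta:
  assumes "0 \<le> \<theta>" "\<theta> \<le> 1"
  shows "pmf (R_theta \<theta>) x = (case x of None \<Rightarrow> \<theta> | Some _ \<Rightarrow> (1 - \<theta>) / 2)"
  unfolding R_theta_def
proof (rule pmf_embed_pmf)
  show "\<And>x. 0 \<le> (case x of None \<Rightarrow> \<theta> | Some _ \<Rightarrow> (1 - \<theta>) / 2)" using assms by (auto split: option.split)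
  have "(\<integral>\<^sup>+ (x::bool option). ennreal (case x of None \<Rightarrow> \<theta> | Some _ \<Rightarrow> (1 - \<theta>) / 2) \<partial>count_space UNIV)
     = (\<Sum>(x::bool option)\<in>UNIV. ennreal (case x of None \<Rightarrow> \<theta> | Some _ \<Rightarrow> (1 - \<theta>) / 2))"
    by (rule nn_integral_count_space_finite[OF finUNIV])
  also have "\<dots> = (\<Sum>x\<in>{None, Some True, Some False}. ennreal (case x of None \<Rightarrow> \<theta> | Some _ \<Rightarrow> (1 - \<theta>) / 2))"
    by (simp only: UNIV_bool_option)
  also have "\<dots> = ennreal \<theta> + ennreal ((1-\<theta>)/2) + ennreal ((1-\<theta>)/2)"
    by simp
  also have "\<dots> = ennreal (\<theta> + (1-\<theta>)/2 + (1-\<theta>)/2)"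
    using assms by (simp add: ennreal_plus[symmetric] del: ennreal_plus)
  also have "\<dots> = 1" by simp
  finally show "(\<integral>\<^sup>+ (x::bool option). ennreal (case x of None \<Rightarrow> \<theta> | Some _ \<Rightarrow> (1 - \<theta>) / 2) \<partial>count_space UNIV) = 1" .
qed

lemma split_bound:
  fixes p :: "'a \<Rightarrow> 'b pmf"
  assumes fin: "finite A" "finite B" and disj: "A \<inter> B = {}" and K: "K \<ge> 0"
  and sub: "\<And>f g. f \<in> set_pmf (Pi_pmf A d p) \<Longrightarrow> g \<in> set_pmf (Pi_pmf B d p) \<Longrightarrow>
              (\<lambda>x. if x \<in> A then f x else g x) \<in> X \<Longrightarrow> f \<in> E \<and> g \<in> G f"
  and bnd: "\<And>f. f \<in> E \<Longrightarrow> measure_pmf.prob (Pi_pmf B d p) (G f) \<le> K"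
  shows "measure_pmf.prob (Pi_pmf (A \<union> B) d p) X \<le> measure_pmf.prob (Pi_pmf A d p) E * K"
proof -
  let ?h = "\<lambda>(f,g) x. if x \<in> A then f x else g x"
  let ?PA = "Pi_pmf A d p" and ?PB = "Pi_pmf B d p"
  have eq: "Pi_pmf (A \<union> B) d p = map_pmf ?h (pair_pmf ?PA ?PB)"
    by (rule Pi_pmf_union[OF fin disj])
  have "emeasure (measure_pmf (Pi_pmf (A \<union> B) d p)) X = emeasure (measure_pmf (pair_pmf ?PA ?PB)) (?h -` X)"
    unfolding eq by (simp add: emeasure_map_pmf)
  also have "\<dots> = (\<integral>\<^sup>+z. indicator (?h -` X) z \<partial>pair_pmf ?PA ?PB)"
    by simp
  also have "\<dots> = (\<integral>\<^sup>+f. \<integral>\<^sup>+g. indicator (?h -` X) (f,g) \<partial>?PB \<partial>?PA)"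
    by (rule nn_integral_pair_pmf')
  also have "\<dots> \<le> (\<integral>\<^sup>+f. indicator E f * ennreal K \<partial>?PA)"
  proof (rule nn_integral_mono_AE, rule AE_pmfI)
    fix f assume f: "f \<in> set_pmf ?PA"
    have "(\<integral>\<^sup>+g. indicator (?h -` X) (f,g) \<partial>?PB) \<le> (\<integral>\<^sup>+g. indicator E f * indicator (G f) g \<partial>?PB)"
    proof (rule nn_integral_mono_AE, rule AE_pmfI)
      fix g assume g: "g \<in> set_pmf ?PB"
      show "indicator (?h -` X) (f,g) \<le> (indicator E f * indicator (G f) g :: ennreal)"
        using sub[OF f g] by (auto simp: indicator_def)
    qed
    also have "\<dots> = indicator E f * emeasure (measure_pmf ?PB) (G f)"
      by (subst nn_integral_cmult) auto
    also have "\<dots> \<le> indicator E f * ennreal K"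
      using bnd by (auto simp: indicator_def measure_pmf.emeasure_eq_measure intro: ennreal_leI)
    finally show "(\<integral>\<^sup>+g. indicator (?h -` X) (f,g) \<partial>?PB) \<le> indicator E f * ennreal K" .
  qed
  also have "\<dots> = emeasure (measure_pmf ?PA) E * ennreal K"
    by (subst nn_integral_multc) auto
  also have "\<dots> = ennreal (measure_pmf.prob ?PA E * K)"
    using K by (simp add: measure_pmf.emeasure_eq_measure ennreal_mult)
  finally show ?thesis
    by (simp add: measure_pmf.emeasure_eq_measure ennreal_le_iff2 K) (use measure_nonneg[of "measure_pmf (Pi_pmf (A \<union> B) d p)" X] measure_nonneg[of "measure_pmf (Pi_pmf A d p)" E] K mult_nonneg_nonneg[of "measure_pmf.prob (Pi_pmf A d p) E" K] in linarith)
qed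

definition istrue :: "('v \<Rightarrow> bool option) \<Rightarrow> ('v \<times> bool) set \<Rightarrow> bool" where
  "istrue r C \<longleftrightarrow> (\<forall>l\<in>C. r (fst l) = Some (snd l))"
definition consis :: "('v \<times> bool) set \<Rightarrow> bool" where
  "consis C \<longleftrightarrow> (\<forall>v. \<not> ((v,True) \<in> C \<and> (v,False) \<in> C))"

lemma istrue_cong: "(\<And>v. v \<in> fst ` C \<Longrightarrow> r v = r' v) \<Longrightarrow> istrue r C = istrue r' C"
  unfolding istrue_def by auto

lemma prob_true_lower:
  assumes "finite C" "consis C" "card C \<le> W" "0 \<le> \<theta>" "\<theta> \<le> 1"
  shows "((1-\<theta>)/2)^W \<le> measure_pmf.prob (Pi_pmf (fst ` C) None (\<lambda>_. R_theta \<theta>)) {f. istrue f C}"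
proof -
  let ?bv = "\<lambda>v. (v,True) \<in> C"
  have sub: "Pi (fst ` C) (\<lambda>v. {Some (?bv v)}) \<subseteq> {f. istrue f C}"
  proof
    fix f assume f: "f \<in> Pi (fst ` C) (\<lambda>v. {Some (?bv v)})"
    show "f \<in> {f. istrue f C}" unfolding istrue_def mem_Collect_eq
    proof (intro ballI)
      fix l assume "l \<in> C"
      then obtain v b where vb: "(v,b) \<in> C" and l: "l = (v,b)" by (cases l) auto
      then have "f v = Some (?bv v)" using f by force
      moreover have "?bv v = b" using vb assms(2) unfolding consis_def by (cases b) auto
      ultimately show "f (fst l) = Some (snd l)" using l by simp
    qed
  qed
  have "measure_pmf.prob (Pi_pmf (fst ` C) None (\<lambda>_. R_theta \<theta>)) (Pi (fst ` C) (\<lambda>v. {Some (?bv v)}))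
      = (\<Prod>v\<in>fst ` C. measure_pmf.prob (R_theta \<theta>) {Some (?bv v)})"
    using assms(1) by (intro measure_Pi_pmf_Pi) auto
  also have "\<dots> = (\<Prod>v\<in>fst ` C. (1-\<theta>)/2)"
    using assms(4,5) by (intro prod.cong refl) (simp add: measure_pmf_single pmf_R_theta)
  also have "\<dots> = ((1-\<theta>)/2) ^ card (fst ` C)" by simp
  also have "\<dots> \<ge> ((1-\<theta>)/2)^W"
  proof (rule power_decreasing)
    have "card (fst ` C) \<le> card C" using assms(1) by (rule card_image_le)
    then show "card (fst ` C) \<le> W" using assms(3) by simp
  qed (use assms(4,5) in auto)
  finally have "((1-\<theta>)/2)^W \<le> measure_pmf.prob (Pi_pmf (fst ` C) None (\<lambda>_. R_theta \<theta>)) (Pi (fst ` C) (\<lambda>v. {Some (?bv v)}))" .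
  also have "\<dots> \<le> measure_pmf.prob (Pi_pmf (fst ` C) None (\<lambda>_. R_theta \<theta>)) {f. istrue f C}"
    using sub by (intro measure_pmf.finite_measure_mono) auto
  finally show ?thesis .
qed

lemma notrue_bound:
  assumes "finite M" "\<forall>C\<in>M. finite C \<and> consis C \<and> card C \<le> W"
    "\<forall>C\<in>M. \<forall>D\<in>M. C \<noteq> D \<longrightarrow> fst ` C \<inter> fst ` D = {}"
    "\<forall>C\<in>M. fst ` C \<subseteq> A" "finite A" "0 \<le> \<theta>" "\<theta> \<le> 1"
  shows "measure_pmf.prob (Pi_pmf A None (\<lambda>_. R_theta \<theta>)) {r. \<forall>C\<in>M. \<not> istrue r C}
           \<le> (1 - ((1-\<theta>)/2)^W) ^ card M"
  using assms(1-5)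
proof (induction M arbitrary: A rule: finite_induct)
  case empty
  then show ?case by simp
next
  case (insert C M)
  let ?a = "((1-\<theta>)/2)^W"
  let ?A1 = "fst ` C" and ?B = "A - fst ` C"
  have a1: "?a \<le> 1" using assms(6,7) by (intro power_le_one) auto
  have finC: "finite C" using insert.prems by auto
  have A_eq: "A = ?A1 \<union> ?B" using insert.prems by auto
  have "measure_pmf.prob (Pi_pmf (?A1 \<union> ?B) None (\<lambda>_. R_theta \<theta>)) {r. \<forall>C\<in>insert C M. \<not> istrue r C}
        \<le> measure_pmf.prob (Pi_pmf ?A1 None (\<lambda>_. R_theta \<theta>)) {f. \<not> istrue f C} * (1 - ?a) ^ card M"
  proof (rule split_bound)
    show "finite ?A1" using finC by simp
    show "finite ?B" using insert.prems by simp
    show "?A1 \<inter> ?B = {}" by auto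
    show "0 \<le> (1 - ?a) ^ card M" using a1 by simp
  next
    fix f g
    assume "f \<in> set_pmf (Pi_pmf ?A1 None (\<lambda>_. R_theta \<theta>))" "g \<in> set_pmf (Pi_pmf ?B None (\<lambda>_. R_theta \<theta>))"
      and h: "(\<lambda>x. if x \<in> ?A1 then f x else g x) \<in> {r. \<forall>C\<in>insert C M. \<not> istrue r C}"
    have "istrue (\<lambda>x. if x \<in> ?A1 then f x else g x) C = istrue f C"
      by (rule istrue_cong) simp
    then have "\<not> istrue f C"
      using h by simp
    moreover have "\<forall>D\<in>M. \<not> istrue g D"
    proof
      fix D assume D: "D \<in> M"
      have "D \<noteq> C" using D insert.hyps(2) by blast
      then have dis: "fst ` D \<inter> fst ` C = {}" using insert.prems(2) D by blast
      have "\<not> istrue (\<lambda>x. if x \<in> ?A1 then f x else g x) D" using h D by simp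
      moreover have "istrue (\<lambda>x. if x \<in> ?A1 then f x else g x) D = istrue g D"
        by (rule istrue_cong) (use dis in auto)
      ultimately show "\<not> istrue g D" by simp
    qed
    ultimately show "f \<in> {f. \<not> istrue f C} \<and> g \<in> {g. \<forall>D\<in>M. \<not> istrue g D}" by simp
  next
    fix f
    show "measure_pmf.prob (Pi_pmf ?B None (\<lambda>_. R_theta \<theta>)) {g. \<forall>D\<in>M. \<not> istrue g D} \<le> (1 - ?a) ^ card M"
    proof (rule insert.IH)
      show "\<forall>C\<in>M. finite C \<and> consis C \<and> card C \<le> W" using insert.prems(1) by blast
      show "\<forall>C'\<in>M. \<forall>D\<in>M. C' \<noteq> D \<longrightarrow> fst ` C' \<inter> fst ` D = {}" using insert.prems(2) by blast
      show "finite ?B" using insert.prems(4) by blast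
      show "\<forall>D\<in>M. fst ` D \<subseteq> ?B"
      proof
        fix D assume D: "D \<in> M"
        have "D \<noteq> C" using D insert.hyps(2) by blast
        then have "fst ` D \<inter> fst ` C = {}" using insert.prems(2) D by blast
        moreover have "fst ` D \<subseteq> A" using insert.prems(3) D by blast
        ultimately show "fst ` D \<subseteq> ?B" by blast
      qed
    qed
  qed
  also have "\<dots> \<le> (1 - ?a) * (1 - ?a) ^ card M"
  proof (rule mult_right_mono)
    have "measure_pmf.prob (Pi_pmf ?A1 None (\<lambda>_. R_theta \<theta>)) {f. \<not> istrue f C}
        = 1 - measure_pmf.prob (Pi_pmf ?A1 None (\<lambda>_. R_theta \<theta>)) {f. istrue f C}"
      using measure_pmf.prob_compl[of "{f. istrue f C}" "Pi_pmf ?A1 None (\<lambda>_. R_theta \<theta>)"]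
      by (simp add: Compl_eq_Diff_UNIV[symmetric] Collect_neg_eq)
    also have "\<dots> \<le> 1 - ?a"
      using prob_true_lower[of C W \<theta>] insert.prems finC assms(6,7) by auto
    finally show "measure_pmf.prob (Pi_pmf ?A1 None (\<lambda>_. R_theta \<theta>)) {f. \<not> istrue f C} \<le> 1 - ?a" .
    show "0 \<le> (1 - ?a) ^ card M" using a1 by simp
  qed
  also have "\<dots> = (1 - ?a) ^ card (insert C M)" using insert.hyps by simp
  finally have "measure_pmf.prob (Pi_pmf (?A1 \<union> ?B) None (\<lambda>_. R_theta \<theta>)) {r. \<forall>C\<in>insert C M. \<not> istrue r C}
     \<le> (1 - ?a) ^ card (insert C M)" .
  then show ?case by (simp only: A_eq[symmetric])
qed

definition dnfv :: "('v \<times> bool) set set \<Rightarrow> ('v \<Rightarrow> bool) \<Rightarrow> bool" where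
  "dnfv T y = (\<exists>C\<in>T. \<forall>l\<in>C. y (fst l) = snd l)"

definition Tp :: "('v \<Rightarrow> 'u) \<Rightarrow> 'v set \<Rightarrow> ('v \<times> bool) set set \<Rightarrow> ('v \<Rightarrow> bool option) \<Rightarrow> ('u \<Rightarrow> bool) \<Rightarrow> ('v \<times> bool) set set" where
  "Tp par A T0 f \<alpha> = (\<lambda>C. {l\<in>C. fst l \<notin> A}) ` {C\<in>T0. \<forall>l\<in>C. fst l \<in> A \<longrightarrow> PhiG par f \<alpha> (fst l) = snd l}"

lemma PhiG_split:
  assumes "v \<in> V" "A = {v\<in>V. par v \<in> S}"
  shows "PhiG par (\<lambda>v. if v\<in>A then f v else g v) (mrg \<alpha> x S) v = (if v\<in>A then PhiG par f \<alpha> v else PhiG par g x v)"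
  using assms by (auto simp: PhiG_def mrg_def split: option.split)

lemma dnf_split:
  assumes "\<forall>C\<in>T0. fst ` C \<subseteq> V" "A = {v\<in>V. par v \<in> S}"
  shows "dnfv T0 (PhiG par (\<lambda>v. if v\<in>A then f v else g v) (mrg \<alpha> x S)) = dnfv (Tp par A T0 f \<alpha>) (PhiG par g x)"
proof -
  let ?r = "\<lambda>v. if v\<in>A then f v else g v"
  have key: "(\<forall>l\<in>C. PhiG par ?r (mrg \<alpha> x S) (fst l) = snd l) \<longleftrightarrow>
      (\<forall>l\<in>C. fst l \<in> A \<longrightarrow> PhiG par f \<alpha> (fst l) = snd l) \<and> (\<forall>l\<in>{l\<in>C. fst l \<notin> A}. PhiG par g x (fst l) = snd l)"
    if C: "C \<in> T0" for C
  proof -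
    have "\<And>l. l \<in> C \<Longrightarrow> PhiG par ?r (mrg \<alpha> x S) (fst l) = (if fst l \<in> A then PhiG par f \<alpha> (fst l) else PhiG par g x (fst l))"
      using assms C by (intro PhiG_split[OF _ assms(2)]) auto
    then show ?thesis by auto
  qed
  show ?thesis
    unfolding dnfv_def Tp_def using key by auto
qed

lemma wdnf_Tp:
  assumes "wdnf (Suc w) V T0" "\<forall>C\<in>T0. \<exists>l\<in>C. par (fst l) \<in> S" "A = {v\<in>V. par v \<in> S}"
  shows "wdnf w (V - A) (Tp par A T0 f \<alpha>)"
  unfolding wdnf_def
proof (intro conjI ballI)
  show "finite (Tp par A T0 f \<alpha>)" using assms(1) unfolding wdnf_def Tp_def by auto
next
  fix C' assume "C' \<in> Tp par A T0 f \<alpha>"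
  then obtain C where C: "C \<in> T0" and C': "C' = {l\<in>C. fst l \<notin> A}" unfolding Tp_def by auto
  have finC: "finite C" "card C \<le> Suc w" "fst ` C \<subseteq> V" using assms(1) C unfolding wdnf_def by auto
  show "finite C'" using finC C' by auto
  obtain l where l: "l \<in> C" "par (fst l) \<in> S" using assms(2) C by auto
  have "fst l \<in> A" using l finC(3) assms(3) by auto
  then have "C' \<subset> C" using l C' by auto
  then have "card C' < card C" using finC(1) by (simp add: psubset_card_mono)
  then show "card C' \<le> w" using finC(2) by simp
  show "fst ` C' \<subseteq> V - A" using C' finC(3) by auto
qed

lemma dnf_true:
  assumes "D \<in> T0" "istrue f D" "fst ` D \<subseteq> A" "\<And>v. v \<in> A \<Longrightarrow> r v = f v"
  shows "dnfv T0 (PhiG par r x)"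
  unfolding dnfv_def
proof (intro bexI[OF _ assms(1)] ballI)
  fix l assume l: "l \<in> D"
  then have "fst l \<in> A" using assms(3) by auto
  then have "r (fst l) = Some (snd l)" using assms(2,4) l unfolding istrue_def by auto
  then show "PhiG par r x (fst l) = snd l" by (simp add: PhiG_def)
qed

lemma step_bound:
  fixes par :: "'v \<Rightarrow> 'u" and V :: "'v set" and T :: "('v \<times> bool) set set"
  assumes th: "0 \<le> \<theta>" "\<theta> \<le> 1"
  and IH: "\<And>V' T' t. finite V' \<Longrightarrow> wdnf w V' T' \<Longrightarrow>
      measure_pmf.prob (Pi_pmf V' None (\<lambda>_. R_theta \<theta>))
        {r. \<not> has_dt_of_height (\<lambda>x. dnfv T' (PhiG par r x)) (real t)} \<le> Ac * lc ^ t"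
  and Ac: "0 \<le> Ac" and lc: "0 \<le> lc"
  and V: "finite V" and T: "wdnf (Suc w) V T"
  shows "\<exists>m cS. cS \<le> Suc w * m \<and>
    (\<forall>s. measure_pmf.prob (Pi_pmf V None (\<lambda>_. R_theta \<theta>))
        {r. \<not> has_dt_of_height (\<lambda>x. dnfv T (PhiG par r x)) (real s)} \<le> (1 - ((1-\<theta>)/2)^(Suc w))^m) \<and>
    (\<forall>s. cS \<le> s \<longrightarrow> measure_pmf.prob (Pi_pmf V None (\<lambda>_. R_theta \<theta>))
        {r. \<not> has_dt_of_height (\<lambda>x. dnfv T (PhiG par r x)) (real s)}
        \<le> (1 - ((1-\<theta>)/2)^(Suc w))^m * (2^cS * (Ac * lc^(s - cS))))"
proof -
  let ?R = "\<lambda>_::'v. R_theta \<theta>"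
  let ?beta = "1 - ((1-\<theta>)/2)^(Suc w)"
  have a1: "((1-\<theta>)/2)^(Suc w) \<le> 1" using th by (intro power_le_one) auto
  have beta0: "0 \<le> ?beta" using a1 by simp
  define T0 where "T0 = {C\<in>T. consis C}"
  have dnfT: "dnfv T y = dnfv T0 y" for y
  proof
    assume "dnfv T y"
    then obtain C where C: "C \<in> T" "\<forall>l\<in>C. y (fst l) = snd l" unfolding dnfv_def by auto
    have "consis C" unfolding consis_def
    proof (intro allI notI)
      fix v assume vc: "(v, True) \<in> C \<and> (v, False) \<in> C"
      have "y v = True" using bspec[OF C(2), of "(v,True)"] vc by simp
      moreover have "y v = False" using bspec[OF C(2), of "(v,False)"] vc by simp
      ultimately show False by simp
    qed
    then show "dnfv T0 y" using C unfolding dnfv_def T0_def by auto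
  next
    assume "dnfv T0 y" then show "dnfv T y" unfolding dnfv_def T0_def by auto
  qed
  have T0w: "wdnf (Suc w) V T0" using T unfolding wdnf_def T0_def by auto
  have finT0: "finite T0" using T0w unfolding wdnf_def by auto
  show ?thesis
  proof (cases "{} \<in> T0")
    case True
    have "dnfv T0 y" for y using True unfolding dnfv_def by blast
    then have "dnfv T (PhiG par r x)" for r x using dnfT by blast
    then have "{r. \<not> has_dt_of_height (\<lambda>x. dnfv T (PhiG par r x)) (real s)} = {}" for s
      using has_dt_const[of "real s" True] by auto
    then show ?thesis using beta0 Ac lc
      by (intro exI[of _ 0]) auto
  next
    case False
    define good where "good M \<longleftrightarrow> M \<subseteq> T0 \<and> (\<forall>C\<in>M. \<forall>D\<in>M. C \<noteq> D \<longrightarrow> par ` fst ` C \<inter> par ` fst ` D = {})" for M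
    have "good {}" unfolding good_def by auto
    moreover have "\<forall>M. good M \<longrightarrow> card M < Suc (card T0)"
      using finT0 unfolding good_def by (auto simp: card_mono less_Suc_eq_le)
    ultimately obtain M where M: "good M" and Mmax: "\<And>M'. good M' \<Longrightarrow> card M' \<le> card M"
      using ex_has_greatest_nat[of good "{}" card "Suc (card T0)"] by blast
    have MT0: "M \<subseteq> T0" using M unfolding good_def by auto
    have finM: "finite M" using MT0 finT0 finite_subset by auto
    have hit: "\<exists>D\<in>M. par ` fst ` C \<inter> par ` fst ` D \<noteq> {}" if C: "C \<in> T0" for C
    proof (cases "C \<in> M")
      case True
      have "C \<noteq> {}" using C False by auto
      then show ?thesis using True by (intro bexI[of _ C]) auto
    next
      case notin: False
      show ?thesis
      proof (rule ccontr)
        assume "\<not> ?thesis"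
        then have disjC: "\<forall>D\<in>M. par ` fst ` C \<inter> par ` fst ` D = {}" by blast
        have Mg: "M \<subseteq> T0" "\<forall>X\<in>M. \<forall>Y\<in>M. X \<noteq> Y \<longrightarrow> par ` fst ` X \<inter> par ` fst ` Y = {}"
          using M unfolding good_def by auto
        have "good (insert C M)" unfolding good_def
        proof (intro conjI ballI impI)
          show "insert C M \<subseteq> T0" using Mg C by simp
          fix X Y assume X: "X \<in> insert C M" and Y: "Y \<in> insert C M" and XY: "X \<noteq> Y"
          show "par ` fst ` X \<inter> par ` fst ` Y = {}"
          proof (cases "X = C")
            case True
            then have "Y \<in> M" using Y XY by simp
            then show ?thesis using disjC True by simp
          next
            case XC: False
            then have XM: "X \<in> M" using X by simp
            show ?thesis
            proof (cases "Y = C")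
              case True
              have "par ` fst ` C \<inter> par ` fst ` X = {}" using disjC XM by simp
              then show ?thesis using True by (metis inf_commute)
            next
              case False
              then have "Y \<in> M" using Y by simp
              then show ?thesis using Mg XM XY by simp
            qed
          qed
        qed
        then have "card (insert C M) \<le> card M" by (rule Mmax)
        then show False using notin finM by simp
      qed
    qed
    define S where "S = (\<Union>D\<in>M. par ` fst ` D)"
    have hitl: "\<forall>C\<in>T0. \<exists>l\<in>C. par (fst l) \<in> S"
    proof
      fix C assume "C \<in> T0"
      from hit[OF this] obtain D where D: "D \<in> M" "par ` fst ` C \<inter> par ` fst ` D \<noteq> {}" ..
      from D(2) obtain u where u: "u \<in> par ` fst ` C" "u \<in> par ` fst ` D" by auto
      from u(1) obtain v where v: "v \<in> fst ` C" "u = par v" by (rule imageE) simp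
      from v(1) obtain l where l: "l \<in> C" "v = fst l" by (rule imageE) simp
      have "u \<in> S" unfolding S_def using D(1) u(2) by (rule UN_I)
      then show "\<exists>l\<in>C. par (fst l) \<in> S" using l v by auto
    qed
    have Mw: "\<forall>D\<in>M. finite D \<and> consis D \<and> card D \<le> Suc w \<and> fst ` D \<subseteq> V"
      using MT0 T0w unfolding wdnf_def T0_def by auto
    have finS: "finite S" unfolding S_def using finM Mw by auto
    have cardS: "card S \<le> Suc w * card M"
    proof -
      have "card S \<le> (\<Sum>D\<in>M. card (par ` fst ` D))" unfolding S_def by (rule card_UN_le[OF finM])
      also have "\<dots> \<le> (\<Sum>D\<in>M. Suc w)"
      proof (rule sum_mono)
        fix D assume D: "D \<in> M"
        have "card (par ` fst ` D) \<le> card (fst ` D)" using Mw D by (intro card_image_le) auto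
        also have "\<dots> \<le> card D" using Mw D by (intro card_image_le) auto
        finally show "card (par ` fst ` D) \<le> Suc w" using Mw D by auto
      qed
      finally show ?thesis by (simp add: mult.commute)
    qed
    define A where "A = {v\<in>V. par v \<in> S}"
    define B where "B = V - A"
    have finA: "finite A" and finB: "finite B" using V unfolding A_def B_def by auto
    have AB: "A \<inter> B = {}" unfolding B_def by auto
    have VAB: "V = A \<union> B" unfolding A_def B_def by auto
    have PV: "Pi_pmf V None ?R = Pi_pmf (A \<union> B) None ?R" using VAB by simp
    have MA: "\<forall>D\<in>M. fst ` D \<subseteq> A" using Mw unfolding A_def S_def by auto
    have Mdisj: "\<forall>C\<in>M. \<forall>D\<in>M. C \<noteq> D \<longrightarrow> fst ` C \<inter> fst ` D = {}"
    proof (intro ballI impI)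
      fix C D assume CD: "C \<in> M" "D \<in> M" "C \<noteq> D"
      have dp: "par ` fst ` C \<inter> par ` fst ` D = {}" using M CD unfolding good_def by blast
      show "fst ` C \<inter> fst ` D = {}"
      proof (rule equals0I)
        fix v assume "v \<in> fst ` C \<inter> fst ` D"
        then have "par v \<in> par ` fst ` C \<inter> par ` fst ` D" by blast
        then show False using dp by simp
      qed
    qed
    have noT: "measure_pmf.prob (Pi_pmf A None ?R) {f. \<forall>D\<in>M. \<not> istrue f D} \<le> ?beta ^ card M"
      by (rule notrue_bound[OF finM _ Mdisj MA finA th]) (use Mw in blast)
    have keyi: "\<forall>D\<in>M. \<not> istrue f D"
      if "(\<lambda>v. if v \<in> A then f v else g v) \<in> {r. \<not> has_dt_of_height (\<lambda>x. dnfv T (PhiG par r x)) (real s)}" for f g s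
    proof (rule ccontr)
      assume "\<not> (\<forall>D\<in>M. \<not> istrue f D)"
      then obtain D where D: "D \<in> M" "istrue f D" by auto
      have "dnfv T0 (PhiG par (\<lambda>v. if v \<in> A then f v else g v) x)" for x
        by (rule dnf_true[of D T0 f A]) (use D MT0 MA in auto)
      then have "(\<lambda>x. dnfv T (PhiG par (\<lambda>v. if v \<in> A then f v else g v) x)) = (\<lambda>x. True)"
        using dnfT by auto
      then show False using that has_dt_const[of "real s" True] by auto
    qed
    have claim1: "measure_pmf.prob (Pi_pmf V None ?R)
        {r. \<not> has_dt_of_height (\<lambda>x. dnfv T (PhiG par r x)) (real s)} \<le> ?beta ^ card M" for s
    proof -
      have "measure_pmf.prob (Pi_pmf (A \<union> B) None ?R)
        {r. \<not> has_dt_of_height (\<lambda>x. dnfv T (PhiG par r x)) (real s)}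
          \<le> measure_pmf.prob (Pi_pmf A None ?R) {f. \<forall>D\<in>M. \<not> istrue f D} * 1"
        by (rule split_bound[OF finA finB AB, where G="\<lambda>_. UNIV"]) (use keyi in auto)
      then show ?thesis using noT PV by simp
    qed
    have claim2: "measure_pmf.prob (Pi_pmf V None ?R)
        {r. \<not> has_dt_of_height (\<lambda>x. dnfv T (PhiG par r x)) (real s)}
        \<le> ?beta ^ card M * (2 ^ card S * (Ac * lc ^ (s - card S)))" if sS: "card S \<le> s" for s
    proof -
      define t where "t = s - card S"
      have st: "real s = real t + real (card S)" using sS unfolding t_def by simp
      let ?G = "\<lambda>f. \<Union>\<alpha>\<in>PiE S (\<lambda>_. UNIV). {g. \<not> has_dt_of_height (\<lambda>x. dnfv (Tp par A T0 f \<alpha>) (PhiG par g x)) (real t)}"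
      have K0: "0 \<le> 2 ^ card S * (Ac * lc ^ t)" using Ac lc by simp
      have "measure_pmf.prob (Pi_pmf (A \<union> B) None ?R)
        {r. \<not> has_dt_of_height (\<lambda>x. dnfv T (PhiG par r x)) (real s)}
          \<le> measure_pmf.prob (Pi_pmf A None ?R) {f. \<forall>D\<in>M. \<not> istrue f D} * (2 ^ card S * (Ac * lc ^ t))"
      proof (rule split_bound[OF finA finB AB K0])
        fix f g
        assume h: "(\<lambda>v. if v \<in> A then f v else g v) \<in> {r. \<not> has_dt_of_height (\<lambda>x. dnfv T (PhiG par r x)) (real s)}"
        have "f \<in> {f. \<forall>D\<in>M. \<not> istrue f D}" using keyi[OF h] by simp
        moreover have "g \<in> ?G f"
        proof (rule ccontr)
          assume "g \<notin> ?G f"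
          then have all: "\<forall>\<alpha>\<in>PiE S (\<lambda>_. UNIV). has_dt_of_height (\<lambda>x. dnfv (Tp par A T0 f \<alpha>) (PhiG par g x)) (real t)"
            by auto
          have "\<forall>\<alpha>\<in>PiE S (\<lambda>_. UNIV). has_dt_of_height (\<lambda>x. dnfv T0 (PhiG par (\<lambda>v. if v \<in> A then f v else g v) (mrg \<alpha> x S))) (real t)"
          proof
            fix \<alpha> :: "'u \<Rightarrow> bool" assume "\<alpha> \<in> PiE S (\<lambda>_. UNIV)"
            then have "has_dt_of_height (\<lambda>x. dnfv (Tp par A T0 f \<alpha>) (PhiG par g x)) (real t)" using all by blast
            moreover have "(\<lambda>x. dnfv T0 (PhiG par (\<lambda>v. if v \<in> A then f v else g v) (mrg \<alpha> x S)))
                = (\<lambda>x. dnfv (Tp par A T0 f \<alpha>) (PhiG par g x))"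
              using dnf_split[of T0 V A par S f g \<alpha>] T0w A_def unfolding wdnf_def by auto
            ultimately show "has_dt_of_height (\<lambda>x. dnfv T0 (PhiG par (\<lambda>v. if v \<in> A then f v else g v) (mrg \<alpha> x S))) (real t)"
              by simp
          qed
          then have "has_dt_of_height (\<lambda>x. dnfv T0 (PhiG par (\<lambda>v. if v \<in> A then f v else g v) x)) (real t + real (card S))"
            by (rule has_dt_merge[OF finS])
          then show False using h st dnfT by simp
        qed
        ultimately show "f \<in> {f. \<forall>D\<in>M. \<not> istrue f D} \<and> g \<in> ?G f" by simp
      next
        fix f
        have finP: "finite (PiE S (\<lambda>_. UNIV::bool set))" using finS by (intro finite_PiE) auto
        have cardP: "card (PiE S (\<lambda>_. UNIV::bool set)) = 2 ^ card S"
          using finS by (simp add: card_PiE)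
        have "measure_pmf.prob (Pi_pmf B None ?R) (?G f)
            \<le> (\<Sum>\<alpha>\<in>PiE S (\<lambda>_. UNIV). measure_pmf.prob (Pi_pmf B None ?R)
                 {g. \<not> has_dt_of_height (\<lambda>x. dnfv (Tp par A T0 f \<alpha>) (PhiG par g x)) (real t)})"
          by (rule measure_pmf.finite_measure_subadditive_finite[OF finP]) auto
        also have "\<dots> \<le> (\<Sum>\<alpha>\<in>PiE S (\<lambda>_. UNIV::bool set). Ac * lc ^ t)"
        proof (rule sum_mono)
          fix \<alpha> :: "'u \<Rightarrow> bool"
          have "wdnf w B (Tp par A T0 f \<alpha>)"
            unfolding B_def by (rule wdnf_Tp[OF T0w hitl A_def])
          then show "measure_pmf.prob (Pi_pmf B None ?R)
                 {g. \<not> has_dt_of_height (\<lambda>x. dnfv (Tp par A T0 f \<alpha>) (PhiG par g x)) (real t)} \<le> Ac * lc ^ t"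
            by (rule IH[OF finB])
        qed
        also have "\<dots> = 2 ^ card S * (Ac * lc ^ t)" using cardP by simp
        finally show "measure_pmf.prob (Pi_pmf B None ?R) (?G f) \<le> 2 ^ card S * (Ac * lc ^ t)" .
      qed
      also have "\<dots> \<le> ?beta ^ card M * (2 ^ card S * (Ac * lc ^ t))"
        by (rule mult_right_mono[OF noT K0])
      finally show ?thesis using PV unfolding t_def by simp
    qed
    show ?thesis
      by (rule exI[of _ "card M"], rule exI[of _ "card S"]) (use cardS claim1 claim2 in auto)
  qed
qed

lemma arith_step:
  fixes \<beta> lc Ac :: real and W :: nat
  assumes b: "0 < \<beta>" "\<beta> < 1" and l: "0 < lc" "lc < 1" and Ac: "0 \<le> Ac" and W: "0 < W"
  shows "\<exists>A' l'. 0 \<le> A' \<and> 0 < l' \<and> l' < 1 \<and> (\<forall>m cS s (P::real). cS \<le> W*m \<longrightarrow> P \<le> \<beta>^m \<longrightarrow>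
           (cS \<le> s \<longrightarrow> P \<le> \<beta>^m * (2^cS*(Ac*lc^(s-cS)))) \<longrightarrow> P \<le> A' * l'^s)"
proof -
  obtain K0 where K0: "lc^K0 < 1/2" using real_arch_pow_inv[of "1/2" lc] l by auto
  define K where "K = Suc K0"
  have K1: "real K \<ge> 1" unfolding K_def by simp
  define x where "x = 2 * lc^K0"
  have x0: "0 < x" and x1: "x < 1" unfolding x_def using K0 l by auto
  define \<mu> where "\<mu> = x powr (1 / real K)"
  define \<nu> where "\<nu> = \<beta> powr (1 / (real K * real W))"
  have Wr: "real W \<ge> 1" using W by simp
  have \<mu>0: "0 < \<mu>" unfolding \<mu>_def using x0 by simp
  have \<mu>1: "\<mu> < 1"
  proof -
    have "x powr (1 / real K) < 1 powr (1 / real K)"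
      by (rule powr_less_mono2) (use K1 x0 x1 in auto)
    then show ?thesis unfolding \<mu>_def by simp
  qed
  have \<nu>0: "0 < \<nu>" unfolding \<nu>_def using b by simp
  have \<nu>1: "\<nu> < 1"
  proof -
    have "\<beta> powr (1 / (real K * real W)) < 1 powr (1 / (real K * real W))"
      by (rule powr_less_mono2) (use K1 Wr b in auto)
    then show ?thesis unfolding \<nu>_def by simp
  qed
  define l' where "l' = max \<mu> \<nu>"
  define A' where "A' = max 1 Ac"
  have l'0: "0 < l'" and l'1: "l' < 1" unfolding l'_def using \<mu>0 \<mu>1 \<nu>0 \<nu>1 by auto
  show ?thesis
  proof (rule exI[of _ A'], rule exI[of _ l'], intro conjI allI impI)
    show "0 \<le> A'" "0 < l'" "l' < 1" using l'0 l'1 unfolding A'_def by auto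
    fix m cS s and P :: real
    assume h1: "cS \<le> W * m" and h2: "P \<le> \<beta>^m"
      and h3: "cS \<le> s \<longrightarrow> P \<le> \<beta>^m * (2^cS*(Ac*lc^(s-cS)))"
    have A'l: "Ac \<le> A'" "1 \<le> A'" unfolding A'_def by auto
    show "P \<le> A' * l'^s"
    proof (cases "s \<le> K * W * m")
      case True
      have "\<beta>^m = \<beta> powr (real m)" using b by (simp add: powr_realpow)
      also have "\<dots> \<le> \<beta> powr (real s * (1 / (real K * real W)))"
      proof (rule powr_mono')
        have "real s \<le> real K * real W * real m" using True by (metis of_nat_le_iff of_nat_mult)
        then show "real s * (1 / (real K * real W)) \<le> real m"
          using K1 Wr by (simp add: field_simps)
      qed (use b in auto)
      also have "\<dots> = \<nu> ^ s" unfolding \<nu>_def using b by (simp add: powr_power)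
      also have "\<dots> \<le> l' ^ s" unfolding l'_def using \<nu>0 by (intro power_mono) auto
      also have "\<dots> \<le> A' * l' ^ s" using A'l l'0 by (simp add: mult_le_cancel_right1)
      finally show ?thesis using h2 by simp
    next
      case False
      then have Kc: "K * cS < s"
      proof -
        have "K * cS \<le> K * (W * m)" using h1 by (rule mult_le_mono2)
        moreover have "K * (W * m) < s" using False by (simp add: mult.assoc)
        ultimately show ?thesis by linarith
      qed
      then have cs: "cS \<le> s" using K1 by (metis dual_order.trans le_less mult_le_cancel2 mult_numeral_1 nat_mult_1 of_nat_1 of_nat_le_iff) 
      have Kcr: "real K * real cS \<le> real s" using Kc by (metis less_imp_le of_nat_le_iff of_nat_mult)
      have bm: "\<beta>^m \<le> 1" using b by (simp add: power_le_one)
      have rest0: "0 \<le> 2^cS*(Ac*lc^(s-cS))" using Ac l by simp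
      have "P \<le> \<beta>^m * (2^cS*(Ac*lc^(s-cS)))" using h3 cs by simp
      also have "\<dots> \<le> 1 * (2^cS*(Ac*lc^(s-cS)))" by (rule mult_right_mono[OF bm rest0])
      also have "\<dots> = Ac * (2^cS * lc^(s-cS))" by simp
      also have "\<dots> \<le> Ac * \<mu>^s"
      proof (rule mult_left_mono[OF _ Ac])
        have e1: "(2::real)^cS \<le> 2 powr (real s / real K)"
        proof -
          have "(2::real)^cS = 2 powr (real cS)" by (simp add: powr_realpow)
          also have "\<dots> \<le> 2 powr (real s / real K)"
            by (rule powr_mono) (use Kcr K1 in \<open>auto simp: field_simps\<close>)
          finally show ?thesis .
        qed
        have e2: "lc^(s-cS) \<le> lc powr (real K0 * (real s / real K))"
        proof -
          have "lc^(s-cS) = lc powr (real (s - cS))" using l by (simp add: powr_realpow)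
          also have "\<dots> \<le> lc powr (real K0 * (real s / real K))"
          proof (rule powr_mono')
            have "real (s - cS) = real s - real cS" using cs by simp
            moreover have "real K0 * real s \<le> real K * (real s - real cS)"
              using Kcr unfolding K_def by (simp add: algebra_simps)
            ultimately show "real K0 * (real s / real K) \<le> real (s - cS)"
              using K1 by (simp add: field_simps)
          qed (use l in auto)
          finally show ?thesis .
        qed
        have "\<mu>^s = x powr (real s * (1 / real K))" unfolding \<mu>_def using x0 by (simp add: powr_power)
        also have "\<dots> = 2 powr (real s / real K) * (lc^K0) powr (real s / real K)"
          unfolding x_def by (simp add: powr_mult)
        also have "(lc^K0) powr (real s / real K) = lc powr (real K0 * (real s / real K))"
          using l by (simp add: powr_realpow[symmetric] powr_powr)
        finally have mu: "\<mu>^s = 2 powr (real s / real K) * lc powr (real K0 * (real s / real K))" .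
        show "2^cS * lc^(s-cS) \<le> \<mu>^s" unfolding mu
          by (rule mult_mono[OF e1 e2]) (use l in auto)
      qed
      also have "\<dots> \<le> A' * l'^s"
        by (rule mult_mono) (use A'l Ac \<mu>0 l'0 in \<open>auto simp: l'_def intro: power_mono\<close>)
      finally show ?thesis .
    qed
  qed
qed

lemma main_ind:
  fixes par :: "'v \<Rightarrow> 'u"
  assumes th: "0 \<le> \<theta>" "\<theta> < 1"
  shows "\<exists>Ac lc. 0 \<le> Ac \<and> 0 < lc \<and> lc < 1 \<and> (\<forall>(V::'v set) T (s::nat). finite V \<longrightarrow> wdnf w V T \<longrightarrow>
     measure_pmf.prob (Pi_pmf V None (\<lambda>_. R_theta \<theta>))
       {r. \<not> has_dt_of_height (\<lambda>x. dnfv T (PhiG par r x)) (real s)} \<le> Ac * lc^s)"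
proof (induction w)
  case 0
  have "measure_pmf.prob (Pi_pmf V None (\<lambda>_. R_theta \<theta>))
       {r. \<not> has_dt_of_height (\<lambda>x. dnfv T (PhiG par r x)) (real s)} \<le> 0 * (1/2)^s"
    if "wdnf 0 V T" for V :: "'v set" and T s
  proof -
    have "\<forall>C\<in>T. C = {}" using that unfolding wdnf_def by auto
    then have "dnfv T y = (T \<noteq> {})" for y unfolding dnfv_def by auto
    then have "{r. \<not> has_dt_of_height (\<lambda>x. dnfv T (PhiG par r x)) (real s)} = {}"
      using has_dt_const[of "real s" "T \<noteq> {}"] by auto
    then show ?thesis by simp
  qed
  then have "\<forall>(V::'v set) T (s::nat). finite V \<longrightarrow> wdnf 0 V T \<longrightarrow>
     measure_pmf.prob (Pi_pmf V None (\<lambda>_. R_theta \<theta>))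
       {r. \<not> has_dt_of_height (\<lambda>x. dnfv T (PhiG par r x)) (real s)} \<le> 0 * (1/2)^s" by blast
  then show ?case by (rule_tac x="0::real" in exI, rule_tac x="1/2::real" in exI) simp
next
  case (Suc w)
  from Suc.IH obtain Ac lc where IHc: "0 \<le> Ac \<and> 0 < lc \<and> lc < 1 \<and> (\<forall>(V::'v set) T (s::nat). finite V \<longrightarrow> wdnf w V T \<longrightarrow>
     measure_pmf.prob (Pi_pmf V None (\<lambda>_. R_theta \<theta>))
       {r. \<not> has_dt_of_height (\<lambda>x. dnfv T (PhiG par r x)) (real s)} \<le> Ac * lc^s)" by (elim exE)
  have IH: "0 \<le> Ac" "0 < lc" "lc < 1" using IHc by auto
  have IHr: "\<And>V T t. finite (V::'v set) \<Longrightarrow> wdnf w V T \<Longrightarrow>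
     measure_pmf.prob (Pi_pmf V None (\<lambda>_. R_theta \<theta>))
       {r. \<not> has_dt_of_height (\<lambda>x. dnfv T (PhiG par r x)) (real t)} \<le> Ac * lc^t"
    using IHc by blast
  define \<beta> where "\<beta> = 1 - ((1-\<theta>)/2)^(Suc w)"
  have a0: "0 < ((1-\<theta>)/2)^(Suc w)" using th by simp
  have a1: "((1-\<theta>)/2)^(Suc w) \<le> 1/2"
  proof -
    have x0: "0 \<le> (1-\<theta>)/2" and x1: "(1-\<theta>)/2 \<le> 1" using th by auto
    have "((1-\<theta>)/2)^w \<le> 1" by (rule power_le_one[OF x0 x1])
    then have "(1-\<theta>)/2 * ((1-\<theta>)/2)^w \<le> (1-\<theta>)/2" by (rule mult_left_le[OF _ x0])
    then have "((1-\<theta>)/2)^(Suc w) \<le> (1-\<theta>)/2" by simp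
    moreover have "(1-\<theta>)/2 \<le> 1/2" using th by simp
    ultimately show ?thesis by linarith
  qed
  have b0: "0 < \<beta>" and b1: "\<beta> < 1" unfolding \<beta>_def using a0 a1 by auto
  obtain A' l' where A'l': "0 \<le> A'" "0 < l'" "l' < 1"
    "\<And>m cS s (P::real). cS \<le> Suc w * m \<Longrightarrow> P \<le> \<beta>^m \<Longrightarrow>
           (cS \<le> s \<longrightarrow> P \<le> \<beta>^m * (2^cS*(Ac*lc^(s-cS)))) \<Longrightarrow> P \<le> A' * l'^s"
    using arith_step[OF b0 b1 IH(2,3,1) zero_less_Suc[of w]] by (elim exE conjE) blast
  show ?case
  proof (rule exI[of _ A'], rule exI[of _ l'], intro conjI allI impI)
    show "0 \<le> A'" "0 < l'" "l' < 1" using A'l' by auto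
    fix V :: "'v set" and T s
    assume V: "finite V" and T: "wdnf (Suc w) V T"
    have th1: "\<theta> \<le> 1" using th by simp
    have sb: "\<exists>m cS. cS \<le> Suc w * m \<and>
    (\<forall>s. measure_pmf.prob (Pi_pmf V None (\<lambda>_. R_theta \<theta>))
        {r. \<not> has_dt_of_height (\<lambda>x. dnfv T (PhiG par r x)) (real s)} \<le> (1 - ((1-\<theta>)/2)^(Suc w))^m) \<and>
    (\<forall>s. cS \<le> s \<longrightarrow> measure_pmf.prob (Pi_pmf V None (\<lambda>_. R_theta \<theta>))
        {r. \<not> has_dt_of_height (\<lambda>x. dnfv T (PhiG par r x)) (real s)}
        \<le> (1 - ((1-\<theta>)/2)^(Suc w))^m * (2^cS * (Ac * lc^(s - cS))))"
    proof (rule step_bound)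
      show "0 \<le> \<theta>" "\<theta> \<le> 1" using th by auto
      show "0 \<le> Ac" "0 \<le> lc" using IH by auto
      show "finite V" by (rule V)
      show "wdnf (Suc w) V T" by (rule T)
      fix V' T' t assume "finite (V'::'v set)" "wdnf w V' T'"
      then show "measure_pmf.prob (Pi_pmf V' None (\<lambda>_. R_theta \<theta>))
       {r. \<not> has_dt_of_height (\<lambda>x. dnfv T' (PhiG par r x)) (real t)} \<le> Ac * lc^t" by (rule IHr)
    qed
    then obtain m cS where mc: "cS \<le> Suc w * m"
      "\<forall>s. measure_pmf.prob (Pi_pmf V None (\<lambda>_. R_theta \<theta>))
        {r. \<not> has_dt_of_height (\<lambda>x. dnfv T (PhiG par r x)) (real s)} \<le> \<beta>^m"
      "\<forall>s. cS \<le> s \<longrightarrow> measure_pmf.prob (Pi_pmf V None (\<lambda>_. R_theta \<theta>))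
        {r. \<not> has_dt_of_height (\<lambda>x. dnfv T (PhiG par r x)) (real s)}
        \<le> \<beta>^m * (2^cS * (Ac * lc^(s - cS)))"
      unfolding \<beta>_def by blast
    show "measure_pmf.prob (Pi_pmf V None (\<lambda>_. R_theta \<theta>))
       {r. \<not> has_dt_of_height (\<lambda>x. dnfv T (PhiG par r x)) (real s)} \<le> A' * l'^s"
    proof (rule A'l'(4)[OF mc(1)])
      show "measure_pmf.prob (Pi_pmf V None (\<lambda>_. R_theta \<theta>))
        {r. \<not> has_dt_of_height (\<lambda>x. dnfv T (PhiG par r x)) (real s)} \<le> \<beta>^m" using mc(2) by blast
      show "cS \<le> s \<longrightarrow> measure_pmf.prob (Pi_pmf V None (\<lambda>_. R_theta \<theta>))
        {r. \<not> has_dt_of_height (\<lambda>x. dnfv T (PhiG par r x)) (real s)}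
        \<le> \<beta>^m * (2^cS * (Ac * lc^(s - cS)))" using mc(3) by blast
    qed
  qed
qed

theorem mainTheorem17:
  fixes k w :: nat and \<theta> :: real
  assumes "k \<ge> 2" and "0 \<le> \<theta>" and "\<theta> < 1" and "w > 0"
  shows "\<exists>h > 0. \<exists>C :: real.
    \<forall>d d' :: nat. \<forall>p :: real. \<forall>f :: (nat list \<Rightarrow> bool) \<Rightarrow> bool.
      1 \<le> d' \<longrightarrow> d' \<le> d \<longrightarrow> p > 0 \<longrightarrow> is_wDNF w (tree_level k d') f \<longrightarrow>
      measure_pmf.prob (restr_pmf k \<theta> d')
        {r. \<not> has_dt_of_height (\<lambda>x. f (Phi r x)) (h * ln p)} \<le> C / p"
proof -
  have th: "0 \<le> \<theta>" "\<theta> < 1" using assms by auto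
  obtain Ac lc where c: "0 \<le> Ac" "0 < lc" "lc < 1" and bnd: "\<forall>(V::nat list set) T (s::nat). finite V \<longrightarrow> wdnf w V T \<longrightarrow>
     measure_pmf.prob (Pi_pmf V None (\<lambda>_. R_theta \<theta>))
       {r. \<not> has_dt_of_height (\<lambda>x. dnfv T (PhiG parent r x)) (real s)} \<le> Ac * lc^s"
    using main_ind[OF th, of w parent] by (elim exE conjE) blast
  have lnlc: "ln lc < 0" using c by simp
  define h where "h = - 1 / ln lc"
  have h0: "h > 0" unfolding h_def using lnlc by (simp add: divide_neg_neg)
  have hl: "h * ln lc = -1" unfolding h_def using lnlc by simp
  define C where "C = max 1 (Ac / lc)"
  show ?thesis
  proof (rule exI[of _ h], intro conjI, fact h0, rule exI[of _ C], intro allI impI)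
    fix d d' :: nat and p :: real and f :: "(nat list \<Rightarrow> bool) \<Rightarrow> bool"
    assume p0: "0 < p" and wd: "is_wDNF w (tree_level k d') f"
    define V where "V = tree_level k d'"
    obtain T where T: "finite T" "\<forall>C\<in>T. finite C \<and> card C \<le> w \<and> fst ` C \<subseteq> V"
        "\<forall>y. f y = (\<exists>C\<in>T. \<forall>(v, b)\<in>C. y v = b)"
      using wd unfolding is_wDNF_def V_def by blast
    have fT: "f y = dnfv T y" for y
      using T(3) unfolding dnfv_def by (simp add: case_prod_beta)
    have wT: "wdnf w V T" unfolding wdnf_def using T by blast
    have finV: "finite V"
    proof -
      have "V = {xs. set xs \<subseteq> {..<k} \<and> length xs = d'}" unfolding V_def tree_level_def by auto
      then show ?thesis by (simp add: finite_lists_length_eq)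
    qed
    have PhiE: "Phi r x = PhiG parent r x" for r x by (simp add: Phi_def PhiG_def fun_eq_iff)
    have RP: "restr_pmf k \<theta> d' = Pi_pmf V None (\<lambda>_. R_theta \<theta>)" unfolding restr_pmf_def V_def ..
    let ?bad = "\<lambda>H. {r. \<not> has_dt_of_height (\<lambda>x. f (Phi r x)) H}"
    have C1: "1 \<le> C" "Ac / lc \<le> C" unfolding C_def by auto
    show "measure_pmf.prob (restr_pmf k \<theta> d') (?bad (h * ln p)) \<le> C / p"
    proof (cases "h * ln p < 0")
      case True
      then have "ln p < 0" using h0 by (simp add: mult_less_0_iff)
      then have "p < 1" using p0 by simp
      then have "1 \<le> C / p" using p0 C1 by simp
      moreover have "measure_pmf.prob (restr_pmf k \<theta> d') (?bad (h * ln p)) \<le> 1" by simp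
      ultimately show ?thesis by linarith
    next
      case False
      define s where "s = nat \<lfloor>h * ln p\<rfloor>"
      have s1: "real s \<le> h * ln p" unfolding s_def using False by linarith
      have s2: "h * ln p - 1 \<le> real s" unfolding s_def using False by linarith
      have sub: "?bad (h * ln p) \<subseteq> ?bad (real s)"
        using has_dt_mono[OF _ s1] by blast
      have "measure_pmf.prob (restr_pmf k \<theta> d') (?bad (h * ln p)) \<le> measure_pmf.prob (restr_pmf k \<theta> d') (?bad (real s))"
        using sub by (intro measure_pmf.finite_measure_mono) auto
      also have "?bad (real s) = {r. \<not> has_dt_of_height (\<lambda>x. dnfv T (PhiG parent r x)) (real s)}"
        by (simp add: fT PhiE)
      also have "measure_pmf.prob (restr_pmf k \<theta> d') \<dots> \<le> Ac * lc^s"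
        unfolding RP using bnd finV wT by blast
      also have "lc^s \<le> 1 / (lc * p)"
      proof -
        have "lc^s = lc powr (real s)" using c by (simp add: powr_realpow)
        also have "\<dots> \<le> lc powr (h * ln p - 1)" by (rule powr_mono'[OF s2]) (use c in auto)
        also have "\<dots> = lc powr (h * ln p) / lc" using c by (simp add: powr_diff)
        also have "lc powr (h * ln p) = exp (h * ln p * ln lc)" using c by (simp add: powr_def)
        also have "h * ln p * ln lc = (h * ln lc) * ln p" by (simp only: mult_ac)
        also have "\<dots> = - ln p" using hl by simp
        also have "exp (- ln p) = 1 / p" using p0 by (simp add: exp_minus inverse_eq_divide)
        finally show ?thesis by (simp add: mult.commute)
      qed
      then have "Ac * lc^s \<le> Ac * (1 / (lc * p))" using c by (intro mult_left_mono) auto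
      also have "\<dots> = (Ac / lc) / p" by simp
      also have "\<dots> \<le> C / p" using C1 p0 by (intro divide_right_mono) auto
      finally show ?thesis .
    qed
  qed
qed

end
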